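(* Let $G$ be a finite simple connected graph with exactly $h$ holes. Suppose that all the holes in $G$ are pairwise edge-disjoint and that $G$ has exactly one non-edge maximal clique $K$. If $|V(K)|=h+1$, then there exists a vertex $v\in V(K)$ satisfying one of the following: (a) there is no $K$-avoiding path from $v$ to any vertex of any hole of $G$; (b) $v$ is incident to an edge that belongs to both $K$ and some hole $H$ of $G$, and $v$ is not contained in any hole of $G$ other than $H$.
   Context: A hole of a graph is an induced (chordless) cycle of length at least $4$. A clique is a complete subgraph; a clique is non-edge if it has at least $3$ vertices. For a clique $K$ in $G$, a path $P$ in $G$ is called a $K$-avoiding path if $P$ is not an edge of $K$ and none of the internal vertices of $P$ lies on $K$. *)

theory Defs
  imports Main
begin

definition simple_graph :: "'a set \<Rightarrow> ('a \<Rightarrow> 'a \<Rightarrow> bool) \<Rightarrow> bool" where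
  "simple_graph V E \<longleftrightarrow> finite V \<and> (\<forall>x y. E x y \<longrightarrow> x \<in> V \<and> y \<in> V)
     \<and> (\<forall>x y. E x y \<longrightarrow> E y x) \<and> (\<forall>x. \<not> E x x)"

definition connected_on :: "'a set \<Rightarrow> ('a \<Rightarrow> 'a \<Rightarrow> bool) \<Rightarrow> bool" where
  "connected_on S E \<longleftrightarrow> S \<noteq> {} \<and>
     (\<forall>x\<in>S. \<forall>y\<in>S. (\<lambda>a b. a \<in> S \<and> b \<in> S \<and> E a b)\<^sup>*\<^sup>* x y)"

(* a hole, identified with its vertex set S: the induced subgraph on S is a cycle
   (connected and 2-regular) with at least 4 vertices *)
definition is_hole :: "'a set \<Rightarrow> ('a \<Rightarrow> 'a \<Rightarrow> bool) \<Rightarrow> 'a set \<Rightarrow> bool" where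
  "is_hole V E S \<longleftrightarrow> S \<subseteq> V \<and> finite S \<and> card S \<ge> 4 \<and> connected_on S E
     \<and> (\<forall>x\<in>S. card {y\<in>S. E x y} = 2)"

definition hole_edges :: "('a \<Rightarrow> 'a \<Rightarrow> bool) \<Rightarrow> 'a set \<Rightarrow> 'a set set" where
  "hole_edges E S = {{x, y} | x y. x \<in> S \<and> y \<in> S \<and> E x y}"

definition is_clique :: "'a set \<Rightarrow> ('a \<Rightarrow> 'a \<Rightarrow> bool) \<Rightarrow> 'a set \<Rightarrow> bool" where
  "is_clique V E K \<longleftrightarrow> K \<subseteq> V \<and> K \<noteq> {} \<and> (\<forall>x\<in>K. \<forall>y\<in>K. x \<noteq> y \<longrightarrow> E x y)"

definition is_maximal_clique :: "'a set \<Rightarrow> ('a \<Rightarrow> 'a \<Rightarrow> bool) \<Rightarrow> 'a set \<Rightarrow> bool" where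
  "is_maximal_clique V E K \<longleftrightarrow> is_clique V E K \<and> (\<forall>K'. is_clique V E K' \<and> K \<subseteq> K' \<longrightarrow> K' = K)"

definition non_edge_clique :: "'a set \<Rightarrow> bool" where
  "non_edge_clique K \<longleftrightarrow> finite K \<and> card K \<ge> 3"

definition is_path :: "('a \<Rightarrow> 'a \<Rightarrow> bool) \<Rightarrow> 'a list \<Rightarrow> bool" where
  "is_path E P \<longleftrightarrow> P \<noteq> [] \<and> distinct P \<and> (\<forall>i. Suc i < length P \<longrightarrow> E (P ! i) (P ! Suc i))"

(* K-avoiding: P is not an edge of K, and no internal vertex of P lies in K *)
definition K_avoiding :: "'a set \<Rightarrow> 'a list \<Rightarrow> bool" where
  "K_avoiding K P \<longleftrightarrow> \<not> (length P = 2 \<and> set P \<subseteq> K) \<and> set (butlast (tl P)) \<inter> K = {}"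

end

theory Submission
  imports Defs
begin

lemma rtranclp_sym_rel:
  assumes "\<And>a b. R a b \<Longrightarrow> R b a" and "R\<^sup>*\<^sup>* x y"
  shows "R\<^sup>*\<^sup>* y x"
  using assms(2)
proof (induction rule: rtranclp_induct)
  case base then show ?case by simp
next
  case (step y z)
  then show ?case using assms(1) by (meson converse_rtranclp_into_rtranclp)
qed

lemma cycle_hole:
  assumes sg: "simple_graph V E" and n: "4 \<le> n" and inj: "inj_on f {..<n}" and sub: "f ` {..<n} \<subseteq> V"
  and adj: "\<And>a b. a < n \<Longrightarrow> b < n \<Longrightarrow> E (f a) (f b) \<longleftrightarrow> (b = Suc a \<or> a = Suc b \<or> (a = 0 \<and> b = n - 1) \<or> (a = n - 1 \<and> b = 0))"
  shows "is_hole V E (f ` {..<n})"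
proof -
  let ?S = "f ` {..<n}"
  let ?R = "\<lambda>a b. a \<in> ?S \<and> b \<in> ?S \<and> E a b"
  have symE: "\<And>a b. E a b \<Longrightarrow> E b a" using sg unfolding simple_graph_def by blast
  have card: "card ?S = n" using inj by (simp add: card_image)
  have r0: "?R\<^sup>*\<^sup>* (f 0) (f a)" if "a < n" for a
    using that
  proof (induction a)
    case 0 then show ?case by simp
  next
    case (Suc a)
    have "?R (f a) (f (Suc a))" using Suc.prems adj[of a "Suc a"] by auto
    have "?R\<^sup>*\<^sup>* (f 0) (f a)" using Suc by simp
    then show ?case using rtranclp.rtrancl_into_rtrancl[of ?R] \<open>?R (f a) (f (Suc a))\<close> by blast
  qed
  have conn: "connected_on ?S E"
    unfolding connected_on_def
  proof (intro conjI ballI)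
    show "?S \<noteq> {}" using n by (auto simp: lessThan_empty_iff)
  next
    fix x y assume "x \<in> ?S" "y \<in> ?S"
    then obtain a b where ab: "a < n" "b < n" "x = f a" "y = f b" by auto
    have "?R\<^sup>*\<^sup>* x (f 0)" using r0[OF ab(1)] ab(3) rtranclp_sym_rel[of ?R] symE by blast
    then show "?R\<^sup>*\<^sup>* x y" using r0[OF ab(2)] ab(4) by auto
  qed
  have deg: "card {y\<in>?S. E x y} = 2" if xS: "x \<in> ?S" for x
  proof -
    obtain a where a: "a < n" "x = f a" using xS by auto
    define I where "I = {b. b < n \<and> (b = Suc a \<or> a = Suc b \<or> (a = 0 \<and> b = n - 1) \<or> (a = n - 1 \<and> b = 0))}"
    have eq: "{y\<in>?S. E x y} = f ` I"
      unfolding I_def using a adj by auto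
    have "card I = 2"
    proof (cases "a = 0")
      case True
      then have "I = {Suc 0, n - 1}" unfolding I_def using n by auto
      then show ?thesis using n by simp
    next
      case False
      show ?thesis
      proof (cases "a = n - 1")
        case True
        then have "I = {n - 2, 0}" unfolding I_def using n False by auto
        then show ?thesis using n by simp
      next
        case False2: False
        then have "I = {a - 1, Suc a}" unfolding I_def using n False a by auto
        then show ?thesis by simp
      qed
    qed
    moreover have "inj_on f I" using inj by (rule inj_on_subset) (auto simp: I_def)
    ultimately show ?thesis using eq by (simp add: card_image)
  qed
  show ?thesis unfolding is_hole_def using sub card n conn deg by auto
qed

lemma walk_hole:
  assumes sg: "simple_graph V E"
  and tri: "\<And>a b c. E a b \<Longrightarrow> E b c \<Longrightarrow> E a c \<Longrightarrow> b \<in> K"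
  and clq: "\<And>x y. x \<in> K \<Longrightarrow> y \<in> K \<Longrightarrow> x \<noteq> y \<Longrightarrow> E x y"
  shows "3 \<le> n \<Longrightarrow> f 0 \<in> K \<Longrightarrow> f (n - 1) \<in> K \<Longrightarrow> f 0 \<noteq> f (n - 1)
    \<Longrightarrow> (\<forall>i. Suc i < n \<longrightarrow> E (f i) (f (Suc i)))
    \<Longrightarrow> (\<forall>i. 0 < i \<and> i < n - 1 \<longrightarrow> f i \<notin> K) \<Longrightarrow> \<exists>H. is_hole V E H \<and> f 0 \<in> H"
proof (induction n arbitrary: f rule: less_induct)
  case (less n f)
  have symE: "\<And>a b. E a b \<Longrightarrow> E b a" and irr: "\<And>a. \<not> E a a"
    and EV: "\<And>a b. E a b \<Longrightarrow> a \<in> V \<and> b \<in> V"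
    using sg unfolding simple_graph_def by blast+
  show ?case
  proof (cases "\<exists>i j. i + 2 \<le> j \<and> j < n \<and> \<not> (i = 0 \<and> j = n - 1) \<and> E (f i) (f j)")
    case True
    then obtain i j where ij: "i + 2 \<le> j" "j < n" "\<not> (i = 0 \<and> j = n - 1)" "E (f i) (f j)" by blast
    define g where "g = (\<lambda>a. if a \<le> i then f a else f (a - Suc i + j))"
    define m where "m = Suc i + n - j"
    have mlt: "m < n" and m3: "3 \<le> m" using ij unfolding m_def by auto
    have g0: "g 0 = f 0" unfolding g_def by simp
    have gl: "g (m - 1) = f (n - 1)" unfolding g_def m_def using ij by auto
    have gE: "\<forall>a. Suc a < m \<longrightarrow> E (g a) (g (Suc a))"
    proof (intro allI impI)
      fix a assume a: "Suc a < m"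
      consider "a < i" | "a = i" | "i < a" by linarith
      then show "E (g a) (g (Suc a))"
      proof cases
        case 1 then show ?thesis using less.prems(5) ij unfolding g_def by auto
      next
        case 2 then show ?thesis using ij unfolding g_def by auto
      next
        case 3
        then have "g a = f (a - Suc i + j)" "g (Suc a) = f (Suc (a - Suc i + j))"
        proof -
          have e: "Suc a - Suc i + j = Suc (a - Suc i + j)" using 3 by simp
          show "g a = f (a - Suc i + j)" unfolding g_def using 3 by simp
          show "g (Suc a) = f (Suc (a - Suc i + j))" unfolding g_def using 3 e by (simp del: diff_Suc_Suc)
        qed
        moreover have "Suc (a - Suc i + j) < n" using a 3 ij unfolding m_def by auto
        ultimately show ?thesis using less.prems(5) by auto
      qed
    qed
    have gK: "\<forall>a. 0 < a \<and> a < m - 1 \<longrightarrow> g a \<notin> K"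
    proof (intro allI impI)
      fix a assume a: "0 < a \<and> a < m - 1"
      show "g a \<notin> K"
      proof (cases "a \<le> i")
        case True then show ?thesis using less.prems(6) a ij unfolding g_def by auto
      next
        case False
        then have "0 < a - Suc i + j" "a - Suc i + j < n - 1" using a ij unfolding m_def by auto
        then show ?thesis using less.prems(6) False unfolding g_def by auto
      qed
    qed
    have "\<exists>H. is_hole V E H \<and> g 0 \<in> H"
      using less.IH[OF mlt m3, of g] g0 gl less.prems gE gK by simp
    then show ?thesis using g0 by simp
  next
    case False
    then have nochord: "\<And>i j. i + 2 \<le> j \<Longrightarrow> j < n \<Longrightarrow> E (f i) (f j) \<Longrightarrow> i = 0 \<and> j = n - 1" by blast
    have fl: "E (f 0) (f (n - 1))" using clq less.prems by blast
    have n4: "4 \<le> n"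
    proof (rule ccontr)
      assume "\<not> 4 \<le> n"
      then have n3: "n = 3" using less.prems by simp
      have "E (f 0) (f 1)" using less.prems(5) n3 by auto
      have "E (f 1) (f (Suc 1))" using less.prems(5) n3 by (metis One_nat_def Suc_1 lessI numeral_3_eq_3)
      then have "E (f 1) (f 2)" by (simp add: numeral_2_eq_2)
      note \<open>E (f 0) (f 1)\<close> this
      moreover have "E (f 0) (f 2)" using fl n3 by simp
      ultimately have "f 1 \<in> K" using tri by blast
      then show False using less.prems(6) n3 by auto
    qed
    have adj: "E (f a) (f b) \<longleftrightarrow> (b = Suc a \<or> a = Suc b \<or> (a = 0 \<and> b = n - 1) \<or> (a = n - 1 \<and> b = 0))"
      if ab: "a < n" "b < n" for a b
    proof
      assume e: "E (f a) (f b)"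
      have "a \<noteq> b" using e irr by auto
      then consider "a < b" | "b < a" by linarith
      then show "b = Suc a \<or> a = Suc b \<or> (a = 0 \<and> b = n - 1) \<or> (a = n - 1 \<and> b = 0)"
      proof cases
        case 1 then show ?thesis using nochord[of a b] e ab by (cases "b = Suc a") auto
      next
        case 2 then show ?thesis using nochord[of b a] symE[OF e] ab by (cases "a = Suc b") auto
      qed
    next
      assume "b = Suc a \<or> a = Suc b \<or> (a = 0 \<and> b = n - 1) \<or> (a = n - 1 \<and> b = 0)"
      then consider "b = Suc a" | "a = Suc b" | "a = 0 \<and> b = n - 1" | "a = n - 1 \<and> b = 0" by blast
      then show "E (f a) (f b)"
      proof cases
        case 1 then show ?thesis using less.prems(5) ab by simp
      next
        case 2 then have "E (f b) (f a)" using less.prems(5) ab by simp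
        then show ?thesis by (rule symE)
      next
        case 3 then show ?thesis using fl by simp
      next
        case 4 then show ?thesis using symE[OF fl] by simp
      qed
    qed
    have inj: "inj_on f {..<n}"
    proof (rule inj_onI)
      fix a b assume a: "a \<in> {..<n}" and b: "b \<in> {..<n}" and fab: "f a = f b"
      show "a = b"
      proof (rule ccontr)
        assume "a \<noteq> b"
        have main: False if "x < y" "y < n" "f x = f y" for x y
        proof -
          have x0: "0 < x"
          proof (rule ccontr)
            assume "\<not> 0 < x"
            then have "x = 0" by simp
            then have "f y \<in> K" using that less.prems(2) by simp
            then have "\<not> (0 < y \<and> y < n - 1)" using less.prems(6) by blast
            then have "y = n - 1" using that \<open>x = 0\<close> by linarith
            then show False using less.prems(4) that \<open>x = 0\<close> by simp
          qed
          have "x < n - 1" using that by linarith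
          then have "f x \<notin> K" using less.prems(6) x0 by blast
          then have y1: "y < n - 1" using that less.prems(3) by (cases "y = n - 1") auto
          have "E (f y) (f (Suc y))" using less.prems(5) y1 by simp
          then have "E (f x) (f (Suc y))" using that by simp
          moreover have "x + 2 \<le> Suc y" "Suc y < n" using that y1 by linarith+
          ultimately show False using nochord[of x "Suc y"] x0 by simp
        qed
        show False
          using \<open>a \<noteq> b\<close> a b fab main[of a b] main[of b a] by (cases "a < b") auto
      qed
    qed
    have sub: "f ` {..<n} \<subseteq> V"
    proof
      fix x assume "x \<in> f ` {..<n}"
      then obtain a where a: "a < n" "x = f a" by auto
      show "x \<in> V"
      proof (cases "Suc a < n")
        case True then show ?thesis using less.prems(5) EV a by blast
      next
        case False
        then have "a = n - 1" using a by simp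
        then show ?thesis using fl EV a by blast
      qed
    qed
    have "is_hole V E (f ` {..<n})" using cycle_hole[OF sg n4 inj sub] adj by blast
    moreover have "f 0 \<in> f ` {..<n}" using n4 by auto
    ultimately show ?thesis by blast
  qed
qed

lemma rtranclp_chain:
  assumes "R\<^sup>*\<^sup>* x y"
  shows "\<exists>g m. g 0 = x \<and> g m = y \<and> (\<forall>i<m. R (g i) (g (Suc i)))"
  using assms
proof (induction rule: rtranclp_induct)
  case base
  show ?case by (rule exI[of _ "\<lambda>_. x"], rule exI[of _ 0]) simp
next
  case (step y z)
  then obtain g m where gm: "g 0 = x" "g m = y" "\<forall>i<m. R (g i) (g (Suc i))" by blast
  show ?case
  proof (rule exI[of _ "g(Suc m := z)"], rule exI[of _ "Suc m"], intro conjI allI impI)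
    show "(g(Suc m := z)) 0 = x" using gm by simp
    show "(g(Suc m := z)) (Suc m) = z" by simp
    fix i assume "i < Suc m"
    then show "R ((g(Suc m := z)) i) ((g(Suc m := z)) (Suc i))"
      using gm step.hyps(2) by (cases "i = m") auto
  qed
qed

lemma walk_hole2:
  assumes sg: "simple_graph V E"
  and tri: "\<And>a b c. E a b \<Longrightarrow> E b c \<Longrightarrow> E a c \<Longrightarrow> b \<in> K"
  and clq: "\<And>x y. x \<in> K \<Longrightarrow> y \<in> K \<Longrightarrow> x \<noteq> y \<Longrightarrow> E x y"
  and vw: "v \<in> K" "w \<in> K" "v \<noteq> w"
  and x: "E v x" "x \<notin> K"
  and r: "(\<lambda>a b. E a b \<and> a \<notin> K \<and> b \<notin> K)\<^sup>*\<^sup>* x y"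
  and y: "y \<notin> K" "E y w"
  shows "\<exists>H. is_hole V E H \<and> v \<in> H"
proof -
  obtain g m where gm: "g 0 = x" "g m = y" "\<forall>i<m. E (g i) (g (Suc i)) \<and> g i \<notin> K \<and> g (Suc i) \<notin> K"
    using rtranclp_chain[OF r] by blast
  have gK: "g i \<notin> K" if "i \<le> m" for i
    using that gm y by (cases "i = m") auto
  define f where "f = (\<lambda>i. if i = 0 then v else if i \<le> Suc m then g (i - 1) else w)"
  have f0: "f 0 = v" and fl: "f (m + 3 - 1) = w" unfolding f_def by auto
  have fE: "\<forall>i. Suc i < m + 3 \<longrightarrow> E (f i) (f (Suc i))"
  proof (intro allI impI)
    fix i assume i: "Suc i < m + 3"
    consider "i = 0" | "0 < i \<and> i \<le> m" | "i = Suc m" using i by linarith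
    then show "E (f i) (f (Suc i))"
    proof cases
      case 1 then show ?thesis using x gm unfolding f_def by simp
    next
      case 2
      then have "f i = g (i - 1)" "f (Suc i) = g (Suc (i - 1))" unfolding f_def by auto
      moreover have "i - 1 < m" using 2 by linarith
      ultimately show ?thesis using gm by simp
    next
      case 3 then show ?thesis using y gm unfolding f_def by simp
    qed
  qed
  have fK: "\<forall>i. 0 < i \<and> i < m + 3 - 1 \<longrightarrow> f i \<notin> K"
  proof (intro allI impI)
    fix i assume "0 < i \<and> i < m + 3 - 1"
    then have "f i = g (i - 1)" "i - 1 \<le> m" unfolding f_def by auto
    then show "f i \<notin> K" using gK by simp
  qed
  show ?thesis using walk_hole[OF sg tri clq, where n="m + 3" and f=f] f0 fl fE fK vw by simp
qed

lemma rtranclp_mono_rel: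
  assumes "\<And>a b. R a b \<Longrightarrow> S a b" and "R\<^sup>*\<^sup>* x y"
  shows "S\<^sup>*\<^sup>* x y"
  using assms(2)
  by (induction rule: rtranclp_induct) (auto intro: rtranclp.rtrancl_into_rtrancl assms(1))

lemma hole_clique_le2:
  assumes sg: "simple_graph V E" and H: "is_hole V E H"
  and clq: "\<And>x y. x \<in> K \<Longrightarrow> y \<in> K \<Longrightarrow> x \<noteq> y \<Longrightarrow> E x y"
  shows "card (H \<inter> K) \<le> 2"
proof (rule ccontr)
  assume "\<not> card (H \<inter> K) \<le> 2"
  then have "Suc (Suc (Suc 0)) \<le> card (H \<inter> K)" by simp
  then obtain a b c where abc: "a \<in> H \<inter> K" "b \<in> H \<inter> K" "c \<in> H \<inter> K" "a \<noteq> b" "a \<noteq> c" "b \<noteq> c"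
    by (auto simp: card_le_Suc_iff)
  have finH: "finite H" and c4: "4 \<le> card H" and conn: "connected_on H E"
    and deg: "\<forall>x\<in>H. card {y\<in>H. E x y} = 2"
    using H unfolding is_hole_def by auto
  have nb: "{y\<in>H. E x y} = {p, q}" if "x \<in> H" "p \<in> H" "q \<in> H" "p \<noteq> q" "E x p" "E x q" for x p q
  proof -
    have "{p, q} \<subseteq> {y\<in>H. E x y}" using that by auto
    moreover have "card {p, q} = card {y\<in>H. E x y}" using deg that by simp
    moreover have "finite {y\<in>H. E x y}" using finH by simp
    ultimately show ?thesis by (metis card_subset_eq)
  qed
  have Ka: "a \<in> K" "b \<in> K" "c \<in> K" using abc by auto
  have nba: "{y\<in>H. E a y} = {b, c}" using nb abc clq[OF Ka(1) Ka(2)] clq[OF Ka(1) Ka(3)] by auto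
  have nbb: "{y\<in>H. E b y} = {a, c}" using nb abc clq[OF Ka(2) Ka(1)] clq[OF Ka(2) Ka(3)] by auto
  have nbc: "{y\<in>H. E c y} = {a, b}" using nb abc clq[OF Ka(3) Ka(1)] clq[OF Ka(3) Ka(2)] by auto
  have cl: "z \<in> {a, b, c}" if "(\<lambda>p q. p \<in> H \<and> q \<in> H \<and> E p q)\<^sup>*\<^sup>* a z" for z
    using that
  proof (induction rule: rtranclp_induct)
    case base then show ?case by simp
  next
    case (step y z)
    then have "z \<in> {y'\<in>H. E y y'}" by simp
    then show ?case using step.IH nba nbb nbc by auto
  qed
  have "H \<subseteq> {a, b, c}"
  proof
    fix z assume "z \<in> H"
    then show "z \<in> {a, b, c}" using conn abc cl unfolding connected_on_def by blast
  qed
  then have "card H \<le> card {a, b, c}" by (simp add: card_mono)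
  also have "\<dots> \<le> 3" by (simp add: card_insert_le_m1)
  finally show False using c4 by simp
qed

lemma path_reach:
  assumes sg: "simple_graph V E"
  and tri: "\<And>a b c. E a b \<Longrightarrow> E b c \<Longrightarrow> E a c \<Longrightarrow> b \<in> K"
  and clq: "\<And>x y. x \<in> K \<Longrightarrow> y \<in> K \<Longrightarrow> x \<noteq> y \<Longrightarrow> E x y"
  and P: "is_path E P" "K_avoiding K P" "hd P = v" "v \<in> K" "last P \<noteq> v"
  shows "(\<exists>H. is_hole V E H \<and> v \<in> H) \<or>
     (last P \<notin> K \<and> (\<exists>x. E v x \<and> x \<notin> K \<and> (\<lambda>a b. E a b \<and> a \<notin> K \<and> b \<notin> K)\<^sup>*\<^sup>* x (last P)))"
proof -
  let ?RK = "\<lambda>a b. E a b \<and> a \<notin> K \<and> b \<notin> K"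
  define k where "k = length P - 1"
  have Pne: "P \<noteq> []" and Ei0: "\<forall>i. Suc i < length P \<longrightarrow> E (P ! i) (P ! Suc i)"
    using P(1) unfolding is_path_def by auto
  have P0: "P ! 0 = v" using P(3) Pne by (simp add: hd_conv_nth)
  have lastk: "last P = P ! k" using Pne unfolding k_def by (simp add: last_conv_nth)
  have k1: "1 \<le> k"
  proof (rule ccontr)
    assume "\<not> 1 \<le> k"
    then have "k = 0" by simp
    then show False using lastk P0 P(5) by simp
  qed
  have Ei: "E (P ! i) (P ! Suc i)" if "i < k" for i using Ei0 that unfolding k_def by simp
  have mid: "P ! i \<notin> K" if "0 < i" "i < k" for i
  proof -
    have l: "i - 1 < length (butlast (tl P))" using that unfolding k_def by simp
    then have "butlast (tl P) ! (i - 1) = P ! i"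
      using that by (simp add: nth_butlast nth_tl)
    then have "P ! i \<in> set (butlast (tl P))" using l by (metis nth_mem)
    then show ?thesis using P(2) unfolding K_avoiding_def by blast
  qed
  have r: "?RK\<^sup>*\<^sup>* (P ! 1) (P ! i)" if "0 < i" "i < k" for i
    using that
  proof (induction i)
    case 0 then show ?case by simp
  next
    case (Suc i)
    show ?case
    proof (cases "i = 0")
      case True then show ?thesis by simp
    next
      case False
      then have "?RK\<^sup>*\<^sup>* (P ! 1) (P ! i)" using Suc by simp
      moreover have "?RK (P ! i) (P ! Suc i)" using Ei[of i] mid[of i] mid[of "Suc i"] Suc.prems False by simp
      ultimately show ?thesis by (rule rtranclp.rtrancl_into_rtrancl)
    qed
  qed
  show ?thesis
  proof (cases "P ! k \<in> K")
    case True
    show ?thesis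
    proof (cases "k = 1")
      case k: True
      then have "length P = 2" unfolding k_def using Pne by (cases P) auto
      moreover have "set P \<subseteq> K"
      proof
        fix z assume "z \<in> set P"
        then obtain i where "i < length P" "z = P ! i" by (metis in_set_conv_nth)
        then have "i = 0 \<or> i = k" using k \<open>length P = 2\<close> by auto
        then show "z \<in> K" using \<open>z = P ! i\<close> P0 P(4) True by auto
      qed
      ultimately show ?thesis using P(2) unfolding K_avoiding_def by simp
    next
      case False
      then have k2: "2 \<le> k" using k1 by simp
      have "\<exists>H. is_hole V E H \<and> v \<in> H"
      proof -
        have f1: "v \<noteq> P ! k" using P(5) lastk by simp
        have f2: "E v (P ! 1)" using Ei[of 0] P0 k1 by simp
        have f3: "P ! 1 \<notin> K" using mid[of 1] k2 by simp
        have f4: "?RK\<^sup>*\<^sup>* (P ! 1) (P ! (k - 1))" using r[of "k - 1"] k2 by simp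
        have f5: "P ! (k - 1) \<notin> K" using mid[of "k - 1"] k2 by simp
        have f6: "E (P ! (k - 1)) (P ! k)" using Ei[of "k - 1"] k2 by simp
        show ?thesis by (rule walk_hole2[OF sg tri clq P(4) True f1 f2 f3 f4 f5 f6])
      qed
      then show ?thesis by blast
    qed
  next
    case False
    have "?RK\<^sup>*\<^sup>* (P ! 1) (P ! k)"
    proof (cases "k = 1")
      case True then show ?thesis by simp
    next
      case k2: False
      then have "?RK\<^sup>*\<^sup>* (P ! 1) (P ! (k - 1))" using r[of "k - 1"] k1 by simp
      moreover have "?RK (P ! (k - 1)) (P ! k)"
        using Ei[of "k - 1"] mid[of "k - 1"] False k1 k2 by simp
      ultimately show ?thesis by (rule rtranclp.rtrancl_into_rtrancl)
    qed
    moreover have "E v (P ! 1)" using Ei[of 0] P0 k1 by simp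
    moreover have "P ! 1 \<notin> K"
    proof (cases "k = 1")
      case True then show ?thesis using False by simp
    next
      case False then show ?thesis using mid[of 1] k1 by simp
    qed
    ultimately show ?thesis using False lastk by auto
  qed
qed

lemma reach_hole_disj:
  assumes sg: "simple_graph V E"
  and tri: "\<And>a b c. E a b \<Longrightarrow> E b c \<Longrightarrow> E a c \<Longrightarrow> b \<in> K"
  and clq: "\<And>x y. x \<in> K \<Longrightarrow> y \<in> K \<Longrightarrow> x \<noteq> y \<Longrightarrow> E x y"
  and v: "v \<in> K" "E v x" "x \<notin> K" "(\<lambda>a b. E a b \<and> a \<notin> K \<and> b \<notin> K)\<^sup>*\<^sup>* x y" "y \<notin> K"
  and H: "y \<in> H" "is_hole V E H" "v \<notin> H"
  and nh: "\<not> (\<exists>H. is_hole V E H \<and> v \<in> H)"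
  shows "H \<inter> K = {}"
proof (rule ccontr)
  let ?RK = "\<lambda>a b. E a b \<and> a \<notin> K \<and> b \<notin> K"
  assume "H \<inter> K \<noteq> {}"
  then obtain w where w: "w \<in> H" "w \<in> K" by blast
  have conn: "(\<lambda>p q. p \<in> H \<and> q \<in> H \<and> E p q)\<^sup>*\<^sup>* y w"
    using H w unfolding is_hole_def connected_on_def by blast
  have "z \<notin> K \<and> ?RK\<^sup>*\<^sup>* x z" if "(\<lambda>p q. p \<in> H \<and> q \<in> H \<and> E p q)\<^sup>*\<^sup>* y z" for z
    using that
  proof (induction rule: rtranclp_induct)
    case base then show ?case using v by simp
  next
    case (step z z')
    show ?case
    proof (cases "z' \<in> K")
      case True
      have "v \<noteq> z'" using step.hyps(2) H(3) by auto
      have "\<exists>H. is_hole V E H \<and> v \<in> H"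
      proof -
        have f4: "?RK\<^sup>*\<^sup>* x z" using step.IH by simp
        have f5: "z \<notin> K" using step.IH by simp
        have f6: "E z z'" using step.hyps(2) by simp
        show ?thesis by (rule walk_hole2[OF sg tri clq v(1) True \<open>v \<noteq> z'\<close> v(2) v(3) f4 f5 f6])
      qed
      then show ?thesis using nh by blast
    next
      case False
      then show ?thesis using step by (auto intro: rtranclp.rtrancl_into_rtrancl)
    qed
  qed
  then show False using conn w by blast
qed

theorem lemma3:
  fixes V :: "'a set" and E :: "'a \<Rightarrow> 'a \<Rightarrow> bool" and K :: "'a set" and h :: nat
  assumes "simple_graph V E"
    and "connected_on V E"
    and "card {S. is_hole V E S} = h"
    and "\<forall>S T. is_hole V E S \<and> is_hole V E T \<and> S \<noteq> T \<longrightarrow> hole_edges E S \<inter> hole_edges E T = {}"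
    and "is_maximal_clique V E K" and "non_edge_clique K"
    and "\<forall>K'. is_maximal_clique V E K' \<and> non_edge_clique K' \<longrightarrow> K' = K"
    and "card K = h + 1"
  shows "\<exists>v\<in>K.
     (\<not> (\<exists>P H. is_path E P \<and> K_avoiding K P \<and> hd P = v \<and> is_hole V E H \<and> last P \<in> H))
   \<or> (\<exists>u H. u \<in> K \<and> E v u \<and> is_hole V E H \<and> {v, u} \<in> hole_edges E H
        \<and> (\<forall>H'. is_hole V E H' \<and> v \<in> H' \<longrightarrow> H' = H))"
proof (rule ccontr)
  assume neg: "\<not> ?thesis"
  note sg = assms(1)
  have symE: "\<And>a b. E a b \<Longrightarrow> E b a" and irr: "\<And>a. \<not> E a a"
    and EV: "\<And>a b. E a b \<Longrightarrow> a \<in> V \<and> b \<in> V" and finV: "finite V"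
    using sg unfolding simple_graph_def by blast+
  have clq: "\<And>x y. x \<in> K \<Longrightarrow> y \<in> K \<Longrightarrow> x \<noteq> y \<Longrightarrow> E x y"
    using assms(5) unfolding is_maximal_clique_def is_clique_def by blast
  have finK: "finite K" using assms(6) unfolding non_edge_clique_def by simp
  have tri: "b \<in> K" if e: "E a b" "E b c" "E a c" for a b c
  proof -
    define C where "C = {Q. is_clique V E Q \<and> {a, b, c} \<subseteq> Q}"
    have abc: "a \<noteq> b" "b \<noteq> c" "a \<noteq> c" using e irr by auto
    have "is_clique V E {a, b, c}" unfolding is_clique_def using e EV symE by auto
    then have Cne: "{a, b, c} \<in> C" unfolding C_def by simp
    have finC: "finite C"
      by (rule finite_subset[of _ "Pow V"]) (auto simp: C_def is_clique_def finV)
    define M where "M = Max (card ` C)"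
    have "M \<in> card ` C" unfolding M_def using finC Cne by (intro Max_in) auto
    then obtain Q where Q: "Q \<in> C" "card Q = M" by auto
    have "Q \<subseteq> V" using Q(1) unfolding C_def is_clique_def by simp
    then have finQ: "finite Q" using finV by (rule finite_subset)
    have maxQ: "is_maximal_clique V E Q"
      unfolding is_maximal_clique_def
    proof (intro conjI allI impI)
      show "is_clique V E Q" using Q(1) unfolding C_def by simp
      fix K' assume K': "is_clique V E K' \<and> Q \<subseteq> K'"
      then have "K' \<in> C" using Q(1) unfolding C_def by auto
      then have "card K' \<le> M" unfolding M_def using finC by simp
      moreover have "K' \<subseteq> V" using K' unfolding is_clique_def by simp
      then have "finite K'" using finV by (rule finite_subset)
      moreover have "card Q \<le> card K'" using K' \<open>finite K'\<close> by (simp add: card_mono)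
      ultimately have "card Q = card K'" using Q(2) by linarith
      then have "Q = K'" using K' \<open>finite K'\<close> by (simp add: card_subset_eq)
      then show "K' = Q" by simp
    qed
    have "card {a, b, c} \<le> card Q" using Q(1) finQ unfolding C_def by (simp add: card_mono)
    then have "non_edge_clique Q" using abc finQ unfolding non_edge_clique_def by simp
    then have "Q = K" using assms(7) maxQ by blast
    then show "b \<in> K" using Q(1) unfolding C_def by auto
  qed
  let ?RK = "\<lambda>a b. E a b \<and> a \<notin> K \<and> b \<notin> K"
  define Hs where "Hs = {S. is_hole V E S}"
  have finHs: "finite Hs"
    by (rule finite_subset[of _ "Pow V"]) (auto simp: Hs_def is_hole_def finV)
  define T where "T = {v\<in>K. \<exists>H\<in>Hs. v \<in> H}"
  define U where "U = K - T"
  define H0 where "H0 = {H\<in>Hs. H \<inter> K = {}}"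
  define H1 where "H1 = {H\<in>Hs. H \<inter> K \<noteq> {}}"
  have nhU: "\<not> (\<exists>H. is_hole V E H \<and> v \<in> H)" if "v \<in> U" for v
    using that unfolding U_def T_def Hs_def by auto
  define good where "good = (\<lambda>v H. H \<in> H0 \<and> (\<exists>x y. E v x \<and> x \<notin> K \<and> ?RK\<^sup>*\<^sup>* x y \<and> y \<notin> K \<and> y \<in> H))"
  have reachU: "\<exists>H. good v H" if vU: "v \<in> U" for v
  proof -
    have vK: "v \<in> K" using vU unfolding U_def by simp
    then obtain P H where PH: "is_path E P" "K_avoiding K P" "hd P = v" "is_hole V E H" "last P \<in> H"
      using neg by blast
    have vH: "v \<notin> H" using nhU[OF vU] PH(4) by blast
    then have lPv: "last P \<noteq> v" using PH(5) by auto
    have "(\<exists>H. is_hole V E H \<and> v \<in> H) \<or>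
     (last P \<notin> K \<and> (\<exists>x. E v x \<and> x \<notin> K \<and> ?RK\<^sup>*\<^sup>* x (last P)))"
      by (rule path_reach[where V=V and E=E and K=K, OF sg _ _ PH(1-3) vK lPv]) (fact tri, fact clq)
    with nhU[OF vU]
    obtain x where x: "last P \<notin> K" "E v x" "x \<notin> K" "?RK\<^sup>*\<^sup>* x (last P)" by blast
    have "H \<inter> K = {}"
      by (rule reach_hole_disj[where V=V and E=E and K=K, OF sg _ _ vK x(2) x(3) x(4) x(1) PH(5) PH(4) vH nhU[OF vU]]) (fact tri, fact clq)
    then have "H \<in> H0" using PH(4) unfolding H0_def Hs_def by simp
    then show ?thesis unfolding good_def using x PH(5) by blast
  qed
  define sel where "sel = (\<lambda>v. SOME H. good v H)"
  have selg: "good v (sel v)" if "v \<in> U" for v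
    unfolding sel_def using reachU[OF that] by (rule someI_ex)
  have injsel: "inj_on sel U"
  proof (rule inj_onI)
    fix v v' assume v: "v \<in> U" and v': "v' \<in> U" and eq: "sel v = sel v'"
    show "v = v'"
    proof (rule ccontr)
      assume ne: "v \<noteq> v'"
      let ?H = "sel v"
      obtain x y where xy: "E v x" "x \<notin> K" "?RK\<^sup>*\<^sup>* x y" "y \<notin> K" "y \<in> ?H" and H0: "?H \<in> H0"
        using selg[OF v] unfolding good_def by blast
      obtain x' y' where xy': "E v' x'" "x' \<notin> K" "?RK\<^sup>*\<^sup>* x' y'" "y' \<notin> K" "y' \<in> ?H"
        using selg[OF v'] eq unfolding good_def by auto
      have hole: "is_hole V E ?H" and dis: "?H \<inter> K = {}" using H0 unfolding H0_def Hs_def by auto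
      have "(\<lambda>p q. p \<in> ?H \<and> q \<in> ?H \<and> E p q)\<^sup>*\<^sup>* y y'"
        using hole xy(5) xy'(5) unfolding is_hole_def connected_on_def by blast
      then have "?RK\<^sup>*\<^sup>* y y'" by (rule rtranclp_mono_rel[rotated]) (use dis in blast)
      moreover have "?RK\<^sup>*\<^sup>* y' x'" by (rule rtranclp_sym_rel[OF _ xy'(3)]) (use symE in blast)
      ultimately have r: "?RK\<^sup>*\<^sup>* x x'" using xy(3) by (meson rtranclp_trans)
      have vK: "v \<in> K" "v' \<in> K" using v v' unfolding U_def by auto
      have "\<exists>H. is_hole V E H \<and> v \<in> H"
        by (rule walk_hole2[where V=V and E=E and K=K, OF sg _ _ vK(1) vK(2) ne xy(1) xy(2) r xy'(2) symE[OF xy'(1)]]) (fact tri, fact clq)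
      then show False using nhU[OF v] by blast
    qed
  qed
  have "sel ` U \<subseteq> H0" using selg unfolding good_def by auto
  moreover have "finite H0" using finHs unfolding H0_def by simp
  ultimately have cU: "card U \<le> card H0" using injsel by (simp add: card_inj_on_le)
  define cw where "cw = (\<lambda>H. 2 div card (H \<inter> K))"
  have c12: "card (H \<inter> K) = 1 \<or> card (H \<inter> K) = 2" if "H \<in> H1" for H
  proof -
    have "is_hole V E H" using that unfolding H1_def Hs_def by simp
    then have "card (H \<inter> K) \<le> 2" by (rule hole_clique_le2[where V=V and E=E and K=K, OF sg]) (fact clq)
    moreover have "card (H \<inter> K) \<noteq> 0" using that finK unfolding H1_def by simp
    ultimately show ?thesis by linarith
  qed
  have TH: "{v \<in> T. v \<in> H} = H \<inter> K" if "H \<in> H1" for H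
    using that unfolding T_def H1_def by auto
  have finT: "finite T" using finK unfolding T_def by simp
  have finH1: "finite H1" using finHs unfolding H1_def by simp
  have eq1: "(\<Sum>H\<in>H1. \<Sum>v\<in>{v \<in> T. v \<in> H}. cw H) = (\<Sum>H\<in>H1. 2)"
  proof (rule sum.cong)
    fix H assume H: "H \<in> H1"
    have "(\<Sum>v\<in>{v \<in> T. v \<in> H}. cw H) = card (H \<inter> K) * cw H" using TH[OF H] by simp
    also have "\<dots> = 2" using c12[OF H] unfolding cw_def by auto
    finally show "(\<Sum>v\<in>{v \<in> T. v \<in> H}. cw H) = 2" .
  qed simp
  have eq2: "(\<Sum>H\<in>H1. \<Sum>v\<in>{v \<in> T. v \<in> H}. cw H) = (\<Sum>v\<in>T. \<Sum>H\<in>{H \<in> H1. v \<in> H}. cw H)"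
    using sum.swap_restrict[OF finH1 finT, of "\<lambda>H v. cw H" "\<lambda>H v. v \<in> H"] by simp
  have ge: "2 \<le> (\<Sum>H\<in>{H \<in> H1. v \<in> H}. cw H)" if vT: "v \<in> T" for v
  proof -
    obtain H where H: "H \<in> Hs" "v \<in> H" and vK: "v \<in> K" using vT unfolding T_def by auto
    have HH1: "H \<in> H1" using H vK unfolding H1_def by auto
    have finS: "finite {H \<in> H1. v \<in> H}" using finH1 by simp
    have HS: "H \<in> {H \<in> H1. v \<in> H}" using HH1 H by simp
    show ?thesis
    proof (cases "card (H \<inter> K) = 1")
      case True
      then have "cw H = 2" unfolding cw_def by simp
      then show ?thesis using member_le_sum[OF HS, of cw] finS by simp
    next
      case False
      then have c2: "card (H \<inter> K) = 2" using c12[OF HH1] by simp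
      then obtain a b where ab: "H \<inter> K = {a, b}" "a \<noteq> b" by (auto simp: card_2_iff)
      obtain u where u: "H \<inter> K = {v, u}" "u \<noteq> v"
      proof (cases "v = a")
        case True then show ?thesis using that ab by auto
      next
        case False
        then have "v = b" using ab H(2) vK by blast
        then show ?thesis using that[of a] ab by (auto simp: insert_commute)
      qed
      have uK: "u \<in> K" and uH: "u \<in> H" using u by auto
      have Evu: "E v u" using clq[OF vK uK] u(2) by simp
      have hole: "is_hole V E H" using H unfolding Hs_def by simp
      have "{v, u} \<in> hole_edges E H" unfolding hole_edges_def using H(2) uH Evu by blast
      then obtain H' where H': "is_hole V E H'" "v \<in> H'" "H' \<noteq> H"
        using neg vK uK Evu hole by blast
      have H'S: "H' \<in> {H \<in> H1. v \<in> H}" using H' vK unfolding H1_def Hs_def by auto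
      have cH: "cw H = 1" using c2 unfolding cw_def by simp
      have cH': "1 \<le> cw H'" using c12[of H'] H'S unfolding cw_def by auto
      have "(\<Sum>H\<in>{H, H'}. cw H) \<le> (\<Sum>H\<in>{H \<in> H1. v \<in> H}. cw H)"
        using HS H'S finS by (intro sum_mono2) auto
      moreover have "(\<Sum>H\<in>{H, H'}. cw H) = cw H + cw H'" using H'(3) by simp
      ultimately show ?thesis using cH cH' by simp
    qed
  qed
  have "(\<Sum>v\<in>T. 2::nat) \<le> (\<Sum>v\<in>T. \<Sum>H\<in>{H \<in> H1. v \<in> H}. cw H)"
    using ge by (rule sum_mono)
  then have "2 * card T \<le> 2 * card H1" using eq1 eq2 by simp
  then have cT: "card T \<le> card H1" by simp
  have TK: "T \<subseteq> K" unfolding T_def by auto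
  then have "card U = card K - card T" unfolding U_def using finK finT by (simp add: card_Diff_subset)
  moreover have "card T \<le> card K" using TK finK by (simp add: card_mono)
  ultimately have "card K = card T + card U" by simp
  moreover have "card Hs = card H0 + card H1"
  proof -
    have "Hs = H0 \<union> H1" "H0 \<inter> H1 = {}" unfolding H0_def H1_def by auto
    then show ?thesis using finHs by (metis card_Un_disjoint finite_Un)
  qed
  moreover have "card Hs = h" using assms(3) unfolding Hs_def by simp
  ultimately show False using cT cU assms(8) by linarith
qed

end
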